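(* For all $z\in\mathbb S^1$, $\mathrm n_-(b_z)\le2\dim(M)-\mathrm n_0(\gamma)$; if moreover $z$ is not an eigenvalue of $\mathfrak P$, then $\mathrm n_-(b_z)\le\dim(M)-\mathrm n_0(\gamma)$. Consequently, for every integer $N\ge1$, with $\omega=e^{2\pi i/N}$, $$0\le\sum_{k=0}^{N-1}\mathrm n_-(b_{\omega^k})\le N\big[\dim(M)-\mathrm n_0(\gamma)\big]+4\dim(M)^2-2\,\mathrm n_0(\gamma)\dim(M).$$
   Context: Let $(M,g)$ be a semi-Riemannian manifold of dimension $n$ and $\gamma:[0,1]\to M$ an orientation preserving closed geodesic, extended $1$-periodically. Fix a smooth $1$-periodic family of isomorphisms $T_t:\mathbb R^n\to T_{\gamma(t)}M$ with $g(T_te_i,T_te_j)=\epsilon_i\delta_{ij}$, $\epsilon_i\in\{\pm1\}$. Put $G(u,v)=\sum_j\epsilon_ju_j\bar v_j$ on $\mathbb C^n$. Let $\overline R_t=T_t^{-1}\circ R(\dot\gamma(t),T_t\,\cdot\,)\dot\gamma(t)$ (curvature $R(X,Y)=[\nabla_X,\nabla_Y]-\nabla_{[X,Y]}$) and $\Gamma_t$ defined by $T_t^{-1}\tfrac{D}{dt}\big(T_t\overline V(t)\big)=\overline V'(t)+\Gamma_t\overline V(t)$, extended $\mathbb C$-linearly. The Jacobi equation (J) is $V''+2\Gamma_rV'+(\Gamma_r'+\Gamma_r^2-\overline R_r)V=0$. The linearized Poincaré map $\mathfrak P:\mathbb C^{2n}\to\mathbb C^{2n}$ is $\mathfrak P(v,v')=\big(V(1),V'(1)+\Gamma_0V(1)\big)$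 where $V$ solves (J) with $V(0)=v$, $V'(0)=v'-\Gamma_0v$. $\mathrm n_0(\gamma)$ is the dimension of the space of solutions of (J) with $V(0)=V(1)=0$. $\mathbb J^{(2)}_\gamma(z)=\{V\ \text{solution of (J)}:V(1)=zV(0)\}$ and $b_z$ is the Hermitian form on $\mathbb J^{(2)}_\gamma(z)$ given by $b_z(V,W)=G\big(\bar zV'(1)-V'(0),W(0)\big)$. $\mathrm n_-(b)$ is the index (maximal dimension of a negative definite subspace) of a Hermitian form $b$. *)

theory Defs
  imports "HOL-Analysis.Analysis" "HOL-Library.Function_Algebras"
begin

text \<open>Everything is expressed in a fixed 1-periodic orthonormal frame T_t along gamma;
  the index type 'n has CARD('n) = dim M elements.\<close>

definition smooth_fun :: "(real \<Rightarrow> 'a::real_normed_vector) \<Rightarrow> bool" where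
  "smooth_fun f \<longleftrightarrow> (\<exists>D. D 0 = f \<and> (\<forall>k t. (D k has_vector_derivative D (Suc k) t) (at t)))"

definition cmat :: "real^'n^'m \<Rightarrow> complex^'n^'m" where
  "cmat A = (\<chi> i j. complex_of_real (A $ i $ j))"

definition Gform :: "('n::finite \<Rightarrow> real) \<Rightarrow> complex^'n \<Rightarrow> complex^'n \<Rightarrow> complex" where
  "Gform eps u v = (\<Sum>j\<in>UNIV. complex_of_real (eps j) * u $ j * cnj (v $ j))"

abbreviation vd :: "(real \<Rightarrow> 'a::real_normed_vector) \<Rightarrow> real \<Rightarrow> 'a" where
  "vd f t \<equiv> vector_derivative f (at t)"

definition jacobi_sol :: "(real \<Rightarrow> real^'n^'n) \<Rightarrow> (real \<Rightarrow> real^'n^'n)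
    \<Rightarrow> (real \<Rightarrow> complex^'n) \<Rightarrow> bool" where
  "jacobi_sol Gam R V \<longleftrightarrow> (\<exists>V1 V2. \<forall>t.
      (V has_vector_derivative V1 t) (at t) \<and> (V1 has_vector_derivative V2 t) (at t) \<and>
      V2 t + (2::complex) *s (cmat (Gam t) *v V1 t)
        + cmat (vd Gam t + Gam t ** Gam t - R t) *v V t = 0)"

definition fscale :: "complex \<Rightarrow> (real \<Rightarrow> complex^'n) \<Rightarrow> (real \<Rightarrow> complex^'n)" where
  "fscale c f = (\<lambda>t. c *s f t)"

definition cdim :: "(real \<Rightarrow> complex^'n) set \<Rightarrow> nat" where
  "cdim S = vector_space.dim fscale S"

definition csubspace :: "(real \<Rightarrow> complex^'n) set \<Rightarrow> bool" where
  "csubspace S = module.subspace fscale S"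

definition n0 :: "(real \<Rightarrow> real^'n^'n) \<Rightarrow> (real \<Rightarrow> real^'n^'n) \<Rightarrow> nat" where
  "n0 Gam R = cdim {V. jacobi_sol Gam R V \<and> V 0 = 0 \<and> V 1 = 0}"

definition J2 :: "(real \<Rightarrow> real^'n^'n) \<Rightarrow> (real \<Rightarrow> real^'n^'n) \<Rightarrow> complex
    \<Rightarrow> (real \<Rightarrow> complex^'n) set" where
  "J2 Gam R z = {V. jacobi_sol Gam R V \<and> V 1 = z *s V 0}"

definition bform :: "('n::finite \<Rightarrow> real) \<Rightarrow> complex \<Rightarrow> (real \<Rightarrow> complex^'n)
    \<Rightarrow> (real \<Rightarrow> complex^'n) \<Rightarrow> complex" where
  "bform eps z V W = Gform eps (cnj z *s vd V 1 - vd V 0) (W 0)"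

definition neg_index :: "((real \<Rightarrow> complex^'n) \<Rightarrow> (real \<Rightarrow> complex^'n) \<Rightarrow> complex)
    \<Rightarrow> (real \<Rightarrow> complex^'n) set \<Rightarrow> nat" where
  "neg_index b S = Sup {d. \<exists>W. csubspace W \<and> W \<subseteq> S \<and> cdim W = d \<and>
       (\<forall>V\<in>W. V \<noteq> 0 \<longrightarrow> Re (b V V) < 0)}"

definition n_minus :: "('n::finite \<Rightarrow> real) \<Rightarrow> (real \<Rightarrow> real^'n^'n) \<Rightarrow> (real \<Rightarrow> real^'n^'n)
    \<Rightarrow> complex \<Rightarrow> nat" where
  "n_minus eps Gam R z = neg_index (bform eps z) (J2 Gam R z)"

definition poincare :: "(real \<Rightarrow> real^'n^'n) \<Rightarrow> (real \<Rightarrow> real^'n^'n)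
    \<Rightarrow> (complex^'n) \<times> (complex^'n) \<Rightarrow> (complex^'n) \<times> (complex^'n)" where
  "poincare Gam R p = (let V = (THE V. jacobi_sol Gam R V \<and> V 0 = fst p \<and>
        vd V 0 = snd p - cmat (Gam 0) *v fst p)
     in (V 1, vd V 1 + cmat (Gam 0) *v V 1))"

definition poincare_eigenvalue :: "(real \<Rightarrow> real^'n^'n) \<Rightarrow> (real \<Rightarrow> real^'n^'n) \<Rightarrow> complex \<Rightarrow> bool" where
  "poincare_eigenvalue Gam R z \<longleftrightarrow>
     (\<exists>v w. (v, w) \<noteq> (0, 0) \<and> poincare Gam R (v, w) = (z *s v, z *s w))"

end

theory Submission
  imports Defs
begin


lemma integral_pow_0:
  fixes c :: real assumes "0 \<le> t"
  shows "integral {0..t} (\<lambda>s. c * s ^ k) = c * t ^ Suc k / real (Suc k)"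
proof -
  have "((\<lambda>s. c * s ^ k) has_integral (c * t ^ Suc k / real (Suc k) - c * 0 ^ Suc k / real (Suc k))) {0..t}"
    apply (rule fundamental_theorem_of_calculus[OF assms])
    apply (rule has_vector_derivative_at_within)
    apply (unfold has_real_derivative_iff_has_vector_derivative[symmetric])
    apply (auto intro!: derivative_eq_intros)
    apply (case_tac k)
     apply (auto simp: field_simps)
    done
  then have "((\<lambda>s. c * s ^ k) has_integral (c * t ^ Suc k / real (Suc k))) {0..t}" by simp
  then show ?thesis by (rule integral_unique)
qed


lemma picard_forward:
  fixes A :: "real \<Rightarrow> 'a::euclidean_space \<Rightarrow> 'a"
  assumes lin: "\<And>t. linear (A t)"
    and bnd: "\<And>T. \<exists>K\<ge>0. \<forall>t\<in>{0..T}. \<forall>x. norm (A t x) \<le> K * norm x"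
    and cont: "\<And>S x. continuous_on S x \<Longrightarrow> continuous_on S (\<lambda>t. A t (x t))"
  shows "\<exists>x. (\<forall>T. continuous_on {0..T} x) \<and> (\<forall>t\<ge>0. x t = x0 + integral {0..t} (\<lambda>s. A s (x s)))"
proof -
  define P where "P = rec_nat (\<lambda>t. x0) (\<lambda>k p t. x0 + integral {0..t} (\<lambda>s. A s (p s)))"
  have P0: "P 0 = (\<lambda>t. x0)" and PS: "\<And>k. P (Suc k) = (\<lambda>t. x0 + integral {0..t} (\<lambda>s. A s (P k s)))"
    by (simp_all add: P_def)
  have Pc: "continuous_on {0..T} (P k)" for k T
  proof (induction k)
    case 0 then show ?case by (simp add: P0)
  next
    case (Suc k)
    have "continuous_on {0..T} (\<lambda>s. A s (P k s))" by (rule cont[OF Suc])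
    then have "(\<lambda>s. A s (P k s)) integrable_on {0..T}" by (rule integrable_continuous_real)
    then have "continuous_on {0..T} (\<lambda>t. integral {0..t} (\<lambda>s. A s (P k s)))"
      by (rule indefinite_integral_continuous_1)
    then show ?case unfolding PS by (intro continuous_intros)
  qed
  have intg: "(\<lambda>s. A s (P k s)) integrable_on {0..t}" for k t
    by (rule integrable_continuous_real[OF cont[OF Pc]])
  define d where "d k t = P (Suc k) t - P k t" for k t
  have d_eq: "d (Suc k) t = integral {0..t} (\<lambda>s. A s (d k s))" for k t
  proof -
    have "d (Suc k) t = integral {0..t} (\<lambda>s. A s (P (Suc k) s)) - integral {0..t} (\<lambda>s. A s (P k s))"
      by (simp add: d_def PS)
    also have "\<dots> = integral {0..t} (\<lambda>s. A s (P (Suc k) s) - A s (P k s))"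
      by (rule integral_diff[symmetric]) (rule intg)+
    also have "\<dots> = integral {0..t} (\<lambda>s. A s (d k s))"
      by (simp add: d_def linear_diff[OF lin])
    finally show ?thesis .
  qed
  have intd: "(\<lambda>s. A s (d k s)) integrable_on {0..t}" for k t
    unfolding d_def linear_diff[OF lin] by (intro integrable_diff intg)
  have dbound: "\<forall>t\<in>{0..T}. norm (d k t) \<le> norm x0 * (K * t) ^ Suc k / fact (Suc k)"
    if K: "K \<ge> 0" "\<forall>t\<in>{0..T}. \<forall>x. norm (A t x) \<le> K * norm x" for T K k
  proof (induction k)
    case 0
    show ?case
    proof
      fix t assume t: "t \<in> {0..T}"
      have "d 0 t = integral {0..t} (\<lambda>s. A s x0)" by (simp add: d_def PS P0)
      also have "norm \<dots> \<le> integral {0..t} (\<lambda>s. K * norm x0)"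
        apply (rule integral_norm_bound_integral)
        using intg[of 0 t] apply (simp add: P0)
         apply (intro integrable_continuous_real continuous_intros)
        using K t by auto
      also have "\<dots> = norm x0 * (K * t) ^ Suc 0 / fact (Suc 0)" using t by simp
      finally show "norm (d 0 t) \<le> norm x0 * (K * t) ^ Suc 0 / fact (Suc 0)" .
    qed
  next
    case (Suc k)
    show ?case
    proof
      fix t assume t: "t \<in> {0..T}"
      have "norm (d (Suc k) t) \<le> integral {0..t} (\<lambda>s. (K * norm x0 * K ^ Suc k / fact (Suc k)) * s ^ Suc k)"
        unfolding d_eq
      proof (rule integral_norm_bound_integral[OF intd])
        show "(\<lambda>s. (K * norm x0 * K ^ Suc k / fact (Suc k)) * s ^ Suc k) integrable_on {0..t}"
          by (intro integrable_continuous_real continuous_intros)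
        fix s assume s: "s \<in> {0..t}"
        then have sT: "s \<in> {0..T}" using t by auto
        have "norm (A s (d k s)) \<le> K * norm (d k s)" using K sT by auto
        also have "\<dots> \<le> K * (norm x0 * (K * s) ^ Suc k / fact (Suc k))"
          using Suc sT K by (intro mult_left_mono) auto
        also have "\<dots> = (K * norm x0 * K ^ Suc k / fact (Suc k)) * s ^ Suc k"
          by (simp add: power_mult_distrib)
        finally show "norm (A s (d k s)) \<le> (K * norm x0 * K ^ Suc k / fact (Suc k)) * s ^ Suc k" .
      qed
      also have "\<dots> = (K * norm x0 * K ^ Suc k / fact (Suc k)) * t ^ Suc (Suc k) / real (Suc (Suc k))"
        by (rule integral_pow_0) (use t in auto)
      also have "\<dots> = norm x0 * (K * t) ^ Suc (Suc k) / fact (Suc (Suc k))"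
        by (simp add: power_mult_distrib field_simps del: fact_Suc) (simp add: algebra_simps)
      finally show "norm (d (Suc k) t) \<le> norm x0 * (K * t) ^ Suc (Suc k) / fact (Suc (Suc k))" .
    qed
  qed
  define x where "x t = x0 + (\<Sum>i. d i t)" for t
  have Psum: "P n t = x0 + (\<Sum>i<n. d i t)" for n t
    unfolding d_def by (subst sum_lessThan_telescope[where f="\<lambda>i. P i t"]) (simp add: P0)
  have unif: "uniform_limit {0..T} P x sequentially" for T
  proof -
    obtain K where K: "K \<ge> 0" "\<forall>t\<in>{0..T}. \<forall>x. norm (A t x) \<le> K * norm x" using bnd by blast
    define M where "M k = norm x0 * (K * T) ^ Suc k / fact (Suc k)" for k
    have Mb: "norm (d k t) \<le> M k" if "t \<in> {0..T}" for k t
    proof -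
      have "norm (d k t) \<le> norm x0 * (K * t) ^ Suc k / fact (Suc k)" using dbound[OF K] that by blast
      also have "\<dots> \<le> M k" unfolding M_def using that K
        by (intro divide_right_mono mult_left_mono power_mono mult_left_mono) auto
      finally show ?thesis .
    qed
    have "summable (\<lambda>k. norm x0 * ((K * T) ^ k / fact k))"
      by (rule summable_mult) (use exp_converges[of "K * T"] in \<open>simp add: sums_iff divide_inverse_commute\<close>)
    moreover have "M = (\<lambda>k. (\<lambda>k. norm x0 * ((K * T) ^ k / fact k)) (Suc k))"
      by (simp add: M_def fun_eq_iff del: fact_Suc power_Suc)
    ultimately have "summable M"
      using summable_Suc_iff[where f="\<lambda>k. norm x0 * ((K * T) ^ k / fact k)"] by simp
    then have "uniform_limit {0..T} (\<lambda>n t. \<Sum>i<n. d i t) (\<lambda>t. \<Sum>i. d i t) sequentially"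
      by (intro Weierstrass_m_test[OF Mb])
    then have "uniform_limit {0..T} (\<lambda>n t. x0 + (\<Sum>i<n. d i t)) (\<lambda>t. x0 + (\<Sum>i. d i t)) sequentially"
      by (intro uniform_limit_add uniform_limit_const)
    then show ?thesis unfolding Psum[abs_def] x_def[abs_def] .
  qed
  have xc: "continuous_on {0..T} x" for T
    by (rule uniform_limit_theorem[OF _ unif]) (auto simp: Pc)
  have xi: "x t = x0 + integral {0..t} (\<lambda>s. A s (x s))" if t: "t \<ge> 0" for t
  proof -
    obtain K where K: "K \<ge> 0" "\<forall>s\<in>{0..t}. \<forall>x. norm (A s x) \<le> K * norm x" using bnd by blast
    have "uniform_limit {0..t} (\<lambda>n s. A s (P n s)) (\<lambda>s. A s (x s)) sequentially"
    proof (rule uniform_limitI)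
      fix e :: real assume e: "e > 0"
      have "\<forall>\<^sub>F n in sequentially. \<forall>s\<in>{0..t}. dist (P n s) (x s) < e / (K + 1)"
        using uniform_limitD[OF unif, of "e / (K + 1)"] e K by auto
      then show "\<forall>\<^sub>F n in sequentially. \<forall>s\<in>{0..t}. dist (A s (P n s)) (A s (x s)) < e"
      proof (rule eventually_mono)
        fix n assume H: "\<forall>s\<in>{0..t}. dist (P n s) (x s) < e / (K + 1)"
        show "\<forall>s\<in>{0..t}. dist (A s (P n s)) (A s (x s)) < e"
        proof
          fix s assume s: "s \<in> {0..t}"
          have "dist (A s (P n s)) (A s (x s)) = norm (A s (P n s - x s))"
            by (simp add: dist_norm linear_diff[OF lin])
          also have "\<dots> \<le> K * norm (P n s - x s)" using K s by auto
          also have "\<dots> \<le> K * (e / (K+1))" using H s K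
            by (intro mult_left_mono) (auto simp: dist_norm less_imp_le)
          also have "\<dots> < e" using e K by (simp add: field_simps)
          finally show "dist (A s (P n s)) (A s (x s)) < e" .
        qed
      qed
    qed
    then obtain I J where IJ: "\<And>n. ((\<lambda>s. A s (P n s)) has_integral I n) {0..t}"
      "((\<lambda>s. A s (x s)) has_integral J) {0..t}" "I \<longlonglongrightarrow> J"
      by (rule uniform_limit_integral) (auto intro: cont Pc)
    have "(\<lambda>n. P (Suc n) t) \<longlonglongrightarrow> x0 + J"
    proof -
      have "integral {0..t} (\<lambda>s. A s (P n s)) = I n" for n using IJ(1) by (rule integral_unique)
      then show ?thesis unfolding PS using IJ(3) by (simp add: tendsto_add)
    qed
    moreover have "(\<lambda>n. P (Suc n) t) \<longlonglongrightarrow> x t"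
      using tendsto_uniform_limitI[OF unif[of t], of t] t by (intro LIMSEQ_Suc) auto
    ultimately have "x t = x0 + J" using LIMSEQ_unique by blast
    then show ?thesis using IJ(2) by (simp add: integral_unique)
  qed
  show ?thesis using xc xi by blast
qed
lemma linear_ode_exists:
  fixes A :: "real \<Rightarrow> 'a::euclidean_space \<Rightarrow> 'a"
  assumes lin: "\<And>t. linear (A t)"
    and bnd: "\<And>T. \<exists>K\<ge>0. \<forall>t\<in>{-T..T}. \<forall>x. norm (A t x) \<le> K * norm x"
    and cont: "\<And>S x. continuous_on S x \<Longrightarrow> continuous_on S (\<lambda>t. A t (x t))"
  shows "\<exists>x. x 0 = x0 \<and> (\<forall>t. (x has_vector_derivative A t (x t)) (at t))"
proof -
  have bnd1: "\<exists>K\<ge>0. \<forall>t\<in>{0..T}. \<forall>x. norm (A t x) \<le> K * norm x" for T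
  proof -
    obtain K where "K \<ge> 0" "\<forall>t\<in>{-T..T}. \<forall>x. norm (A t x) \<le> K * norm x" using bnd by blast
    then show ?thesis by (intro exI[of _ K]) auto
  qed
  obtain x where x: "\<forall>T. continuous_on {0..T} x" "\<forall>t\<ge>0. x t = x0 + integral {0..t} (\<lambda>s. A s (x s))"
    using picard_forward[OF lin bnd1 cont] by blast
  define B where "B t v = - A (-t) v" for t v
  have linB: "linear (B t)" for t
    unfolding B_def
    by (rule linearI) (simp_all add: linear_add[OF lin] linear_scale[OF lin])
  have bndB: "\<exists>K\<ge>0. \<forall>t\<in>{0..T}. \<forall>x. norm (B t x) \<le> K * norm x" for T
  proof -
    obtain K where "K \<ge> 0" "\<forall>t\<in>{-T..T}. \<forall>x. norm (A t x) \<le> K * norm x" using bnd by blast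
    then show ?thesis unfolding B_def by (intro exI[of _ K]) auto
  qed
  have contB: "continuous_on S (\<lambda>t. B t (y t))" if yc: "continuous_on S y" for S y
  proof -
    have "continuous_on (uminus ` S) (\<lambda>u. y (- u))"
      by (rule continuous_on_compose2[OF yc]) (auto intro: continuous_intros)
    then have "continuous_on (uminus ` S) (\<lambda>u. A u (y (- u)))" by (rule cont)
    then have "continuous_on S (\<lambda>t. A (- t) (y (- (- t))))"
      by (rule continuous_on_compose2) (auto intro: continuous_intros)
    then show ?thesis unfolding B_def by (auto intro: continuous_intros)
  qed
  obtain y where y: "\<forall>T. continuous_on {0..T} y" "\<forall>t\<ge>0. y t = x0 + integral {0..t} (\<lambda>s. B s (y s))"
    using picard_forward[OF linB bndB contB] by blast
  have x0': "x 0 = x0" and y0: "y 0 = x0" using x(2) y(2) by auto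
  define z where "z t = (if 0 \<le> t then x t else y (-t))" for t
  define g where "g t = A t (z t)" for t
  have zc: "continuous_on {-T..T} z" for T
  proof (cases "T \<ge> 0")
    case False then show ?thesis by simp
  next
    case True
    have "continuous_on {0..T} z" by (rule continuous_on_eq[OF x(1)[rule_format, of T]]) (auto simp: z_def)
    moreover have "continuous_on {-T..0} z"
    proof (rule continuous_on_eq)
      show "continuous_on {-T..0} (\<lambda>t. y (- t))"
        by (rule continuous_on_compose2[OF y(1)[rule_format, of T]]) (auto intro: continuous_intros)
      show "\<And>t. t \<in> {-T..0} \<Longrightarrow> y (- t) = z t" using x0' y0 by (auto simp: z_def)
    qed
    ultimately have "continuous_on ({-T..0} \<union> {0..T}) z" by (intro continuous_on_closed_Un) auto
    moreover have "{-T..0} \<union> {0..T} = {-T..T}" using True by auto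
    ultimately show ?thesis by simp
  qed
  have gc: "continuous_on {-T..T} g" for T unfolding g_def by (rule cont[OF zc])
  have gi: "g integrable_on {a..b}" if "-T \<le> a" "b \<le> T" for a b T
    by (rule integrable_continuous_real[OF continuous_on_subset[OF gc[of T]]]) (use that in auto)
  have zeq: "z t = x0 + integral {-T..t} g - integral {-T..0} g" if t: "t \<in> {-T..T}" for t T
  proof (cases "t \<ge> 0")
    case True
    have "z t = x0 + integral {0..t} (\<lambda>s. A s (x s))" using True x(2) by (simp add: z_def)
    also have "integral {0..t} (\<lambda>s. A s (x s)) = integral {0..t} g"
      by (rule integral_cong) (auto simp: g_def z_def)
    also have "integral {0..t} g = integral {-T..t} g - integral {-T..0} g"
      using Henstock_Kurzweil_Integration.integral_combine[of "-T" 0 t g] gi[where a="-T" and b=t and T=T] True t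
      by (auto simp: algebra_simps)
    finally show ?thesis by (simp add: algebra_simps)
  next
    case False
    have "z t = x0 + integral {0..-t} (\<lambda>s. B s (y s))" using False y(2) by (simp add: z_def)
    also have "integral {0..-t} (\<lambda>s. B s (y s)) = - integral {0..-t} (\<lambda>s. g (- s))"
    proof -
      have "integral {0..-t} (\<lambda>s. B s (y s)) = integral {0..-t} (\<lambda>s. - g (- s))"
      proof (rule integral_cong)
        fix s assume s: "s \<in> {0..-t}"
        have "z (- s) = y s" using s x0' y0 by (cases "s = 0") (auto simp: z_def)
        then show "B s (y s) = - g (- s)" by (simp add: B_def g_def)
      qed
      then show ?thesis by simp
    qed
    also have "integral {0..-t} (\<lambda>s. g (- s)) = integral {t..0} g"
      using Henstock_Kurzweil_Integration.integral_reflect_real[of 0 t g] by simp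
    also have "integral {t..0} g = integral {-T..0} g - integral {-T..t} g"
      using Henstock_Kurzweil_Integration.integral_combine[of "-T" t 0 g] gi[where a="-T" and b=0 and T=T] False t
      by (auto simp: algebra_simps)
    finally show ?thesis by (simp add: algebra_simps)
  qed
  have "(z has_vector_derivative A t (z t)) (at t)" for t
  proof -
    define T where "T = \<bar>t\<bar> + 1"
    have tin: "t \<in> {-T<..<T}" unfolding T_def by auto
    have "((\<lambda>u. integral {-T..u} g) has_vector_derivative g t) (at t within {-T..T})"
      by (rule integral_has_vector_derivative[OF gc]) (use tin in auto)
    moreover have eq: "at t within {-T..T} = at t"
      using tin by (intro at_within_interior) (simp add: interior_atLeastAtMost_real)
    ultimately have "((\<lambda>u. integral {-T..u} g) has_vector_derivative g t) (at t)"
      by simp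
    then have "((\<lambda>u. x0 + integral {-T..u} g - integral {-T..0} g) has_vector_derivative g t) (at t)"
      by (auto intro!: derivative_eq_intros)
    then have "(z has_vector_derivative g t) (at t)"
    proof (rule has_vector_derivative_transform_within_open[OF _ _ tin])
      show "open {-T<..<T}" by simp
      fix u assume "u \<in> {-T<..<T}"
      then show "x0 + integral {-T..u} g - integral {-T..0} g = z u" using zeq[of u T] by auto
    qed
    then show ?thesis by (simp add: g_def)
  qed
  moreover have "z 0 = x0" using x0' by (simp add: z_def)
  ultimately show ?thesis by blast
qed




lemma gronwall0:
  fixes g g' :: "real \<Rightarrow> real"
  assumes nn: "\<And>t. g t \<ge> 0" and g0: "g 0 = 0"
    and d: "\<And>t. (g has_real_derivative g' t) (at t)"
    and b: "\<And>t. t \<in> {-T..T} \<Longrightarrow> \<bar>g' t\<bar> \<le> K * g t" and K: "K \<ge> 0"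
    and t: "t \<in> {-T..T}"
  shows "g t = 0"
proof (cases "t \<ge> 0")
  case True
  define h where "h s = exp (- K * s) * g s" for s
  have "h t \<le> h 0"
  proof (rule DERIV_nonpos_imp_nonincreasing[of 0 t h, OF True])
    fix s assume s: "0 \<le> s" "s \<le> t"
    have "DERIV h s :> exp (- K * s) * g' s + (- K * exp (- K * s)) * g s"
      unfolding h_def by (auto intro!: derivative_eq_intros d simp: algebra_simps)
    moreover have "exp (- K * s) * g' s + (- K * exp (- K * s)) * g s \<le> 0"
    proof -
      have "g' s \<le> K * g s" using b[of s] s t by auto
      then have "exp (- K * s) * g' s \<le> exp (- K * s) * (K * g s)" by (intro mult_left_mono) auto
      then show ?thesis by (simp add: algebra_simps)
    qed
    ultimately show "\<exists>y. DERIV h s :> y \<and> y \<le> 0" by blast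
  qed
  then have "exp (- K * t) * g t \<le> 0" by (simp add: h_def g0)
  then have "g t \<le> 0" by (simp add: mult_le_0_iff)
  then show ?thesis using nn[of t] by simp
next
  case False
  define h where "h s = exp (K * s) * g s" for s
  have "h t \<le> h 0"
  proof (rule DERIV_nonneg_imp_nondecreasing[of t 0 h])
    show "t \<le> 0" using False by simp
    fix s assume s: "t \<le> s" "s \<le> 0"
    have "DERIV h s :> exp (K * s) * g' s + (K * exp (K * s)) * g s"
      unfolding h_def by (auto intro!: derivative_eq_intros d simp: algebra_simps)
    moreover have "exp (K * s) * g' s + (K * exp (K * s)) * g s \<ge> 0"
    proof -
      have "- g' s \<le> K * g s" using b[of s] s t by auto
      then have "exp (K * s) * (- g' s) \<le> exp (K * s) * (K * g s)" by (intro mult_left_mono) auto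
      then show ?thesis by (simp add: algebra_simps)
    qed
    ultimately show "\<exists>y. DERIV h s :> y \<and> y \<ge> 0" by blast
  qed
  then have "exp (K * t) * g t \<le> 0" by (simp add: h_def g0)
  then have "g t \<le> 0" by (simp add: mult_le_0_iff)
  then show ?thesis using nn[of t] by simp
qed

lemma linear_ode_unique:
  fixes A :: "real \<Rightarrow> 'a::euclidean_space \<Rightarrow> 'a"
  assumes bnd: "\<And>T. \<exists>K\<ge>0. \<forall>t\<in>{-T..T}. \<forall>x. norm (A t x) \<le> K * norm x"
    and d: "\<And>t. (x has_vector_derivative A t (x t)) (at t)"
    and x0: "x 0 = 0"
  shows "x t = 0"
proof -
  define T where "T = \<bar>t\<bar>"
  obtain K where K: "K \<ge> 0" "\<forall>t\<in>{-T..T}. \<forall>x. norm (A t x) \<le> K * norm x" using bnd by blast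
  define g where "g s = inner (x s) (x s)" for s
  have gd: "(g has_real_derivative 2 * inner (x s) (A s (x s))) (at s)" for s
  proof -
    have "(g has_derivative (\<lambda>h. inner (x s) (h *\<^sub>R A s (x s)) + inner (h *\<^sub>R A s (x s)) (x s))) (at s)"
      unfolding g_def using d[of s] unfolding has_vector_derivative_def
      by (auto intro!: derivative_eq_intros)
    then have "(g has_derivative (\<lambda>h. h * (2 * inner (x s) (A s (x s))))) (at s)"
      by (simp add: inner_commute algebra_simps)
    moreover have "(\<lambda>h. h * (2 * inner (x s) (A s (x s)))) = (*) (2 * inner (x s) (A s (x s)))"
      by (auto simp: fun_eq_iff)
    ultimately show ?thesis by (simp add: has_field_derivative_def)
  qed
  have "g t = 0"
  proof (rule gronwall0[OF _ _ gd, where T=T and K="2*K"])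
    show "g s \<ge> 0" for s by (simp add: g_def)
    show "g 0 = 0" by (simp add: g_def x0)
    show "2 * K \<ge> 0" using K by simp
    show "t \<in> {-T..T}" using abs_ge_self[of t] abs_ge_minus_self[of t] by (auto simp: T_def)
    fix s assume s: "s \<in> {-T..T}"
    have "\<bar>2 * inner (x s) (A s (x s))\<bar> \<le> 2 * (norm (x s) * norm (A s (x s)))"
      using Cauchy_Schwarz_ineq2[of "x s" "A s (x s)"] by simp
    also have "\<dots> \<le> 2 * (norm (x s) * (K * norm (x s)))"
      using K s by (intro mult_left_mono) auto
    also have "\<dots> = 2 * K * g s" by (simp add: g_def power2_norm_eq_inner[symmetric] power2_eq_square)
    finally show "\<bar>2 * inner (x s) (A s (x s))\<bar> \<le> 2 * K * g s" .
  qed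
  then show ?thesis by (simp add: g_def)
qed




lemma norm_smult_cvec: "norm (c *s (x::complex^'n)) = cmod c * norm x"
proof -
  have "norm (c *s x) = L2_set (\<lambda>i. cmod c * norm (x $ i)) UNIV"
    by (simp add: norm_vec_def norm_mult)
  also have "\<dots> = cmod c * norm x"
    by (simp add: norm_vec_def L2_set_right_distrib)
  finally show ?thesis .
qed

lemma bl_smult_cvec: "bounded_linear (\<lambda>x::complex^'n. c *s x)"
proof (rule bounded_linear_intro[where K="cmod c"])
  show "c *s (x + y) = c *s x + c *s y" for x y :: "complex^'n" by (simp add: vector_add_ldistrib)
  show "c *s (r *\<^sub>R x) = r *\<^sub>R (c *s x)" for r and x :: "complex^'n"
    by (simp add: vec_eq_iff scaleR_conv_of_real algebra_simps)
  show "norm (c *s x) \<le> norm x * cmod c" for x :: "complex^'n" by (simp add: norm_smult_cvec)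
qed

definition msum :: "complex^'n^'m \<Rightarrow> real" where
  "msum M = (\<Sum>i\<in>UNIV. \<Sum>j\<in>UNIV. norm (M $ i $ j))"

lemma mv_bound: "norm (M *v x) \<le> msum M * norm (x::complex^'n)"
proof -
  have "norm (M *v x) \<le> (\<Sum>i\<in>UNIV. norm ((M *v x) $ i))" unfolding norm_vec_def by (rule L2_set_le_sum) simp
  also have "\<dots> \<le> (\<Sum>i\<in>UNIV. \<Sum>j\<in>UNIV. norm (M $ i $ j) * norm x)"
  proof (rule sum_mono)
    fix i
    have "norm ((M *v x) $ i) = norm (\<Sum>j\<in>UNIV. M $ i $ j * x $ j)" by (simp add: matrix_vector_mult_def)
    also have "\<dots> \<le> (\<Sum>j\<in>UNIV. norm (M $ i $ j * x $ j))" by (rule norm_sum)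
    also have "\<dots> \<le> (\<Sum>j\<in>UNIV. norm (M $ i $ j) * norm x)"
      by (intro sum_mono) (simp add: norm_mult Finite_Cartesian_Product.norm_nth_le mult_left_mono)
    finally show "norm ((M *v x) $ i) \<le> (\<Sum>j\<in>UNIV. norm (M $ i $ j) * norm x)" .
  qed
  also have "\<dots> = msum M * norm x" by (simp add: msum_def sum_distrib_right)
  finally show ?thesis .
qed

lemma cont_mv: "continuous_on S M \<Longrightarrow> continuous_on S x \<Longrightarrow>
  continuous_on S (\<lambda>t. (M t :: complex^'n^'m) *v x t)"
  unfolding matrix_vector_mult_def by (intro continuous_intros)

lemma cont_msum: "continuous_on S M \<Longrightarrow> continuous_on S (\<lambda>t. msum (M t))"
  unfolding msum_def by (intro continuous_intros)

lemma cont_cmat: "continuous_on S A \<Longrightarrow> continuous_on S (\<lambda>t. cmat (A t :: real^'n^'m))"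
  unfolding cmat_def by (intro continuous_intros)

lemma cont_mm: "continuous_on S A \<Longrightarrow> continuous_on S B \<Longrightarrow>
  continuous_on S (\<lambda>t. (A t :: real^'n^'m) ** (B t :: real^'k^'n))"
  unfolding matrix_matrix_mult_def by (intro continuous_intros)

lemma cont_bound:
  fixes f :: "real \<Rightarrow> real"
  assumes "continuous_on {a..b} f"
  shows "\<exists>K\<ge>0. \<forall>t\<in>{a..b}. f t \<le> K"
proof -
  have "bounded (f ` {a..b})" by (rule compact_imp_bounded[OF compact_continuous_image[OF assms]]) simp
  then obtain K where "\<forall>y\<in>f ` {a..b}. norm y \<le> K" by (auto simp: bounded_iff)
  then show ?thesis by (intro exI[of _ "\<bar>K\<bar>"]) force
qed




lemma smooth_facts:
  assumes "smooth_fun (f :: real \<Rightarrow> 'a::real_normed_vector)"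
  shows "continuous_on UNIV f" "continuous_on UNIV (vd f)" "\<And>t. (f has_vector_derivative vd f t) (at t)"
proof -
  obtain D where D: "D 0 = f" "\<And>k t. (D k has_vector_derivative D (Suc k) t) (at t)"
    using assms unfolding smooth_fun_def by blast
  have c: "continuous_on UNIV (D k)" for k
    by (intro continuous_at_imp_continuous_on ballI has_vector_derivative_continuous[OF D(2)])
  have v: "vd f t = D 1 t" for t using vector_derivative_at[OF D(2)[of 0 t]] D(1) by simp
  show "continuous_on UNIV f" using c[of 0] D(1) by simp
  show "continuous_on UNIV (vd f)" using c[of 1] v by (simp add: fun_eq_iff[symmetric] ext)
  show "(f has_vector_derivative vd f t) (at t)" for t using D v[of t] by (metis One_nat_def)
qed

definition odeA :: "(real \<Rightarrow> real^'n^'n) \<Rightarrow> (real \<Rightarrow> real^'n^'n) \<Rightarrow> real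
    \<Rightarrow> ((complex^'n) \<times> (complex^'n)) \<Rightarrow> ((complex^'n) \<times> (complex^'n))" where
  "odeA Gam R t x = (snd x, - ((2::complex) *s (cmat (Gam t) *v snd x))
      - cmat (vd Gam t + Gam t ** Gam t - R t) *v fst x)"

lemma odeA_linear:
  fixes Gam R :: "real \<Rightarrow> real^'n^'n"
  shows "linear (odeA Gam R t)"
proof -
  have l1: "linear ((*v) M)" for M :: "complex^'n^'n" by (simp add: bounded_linear.linear)
  have l2: "linear (\<lambda>x::complex^'n. c *s x)" for c using bl_smult_cvec bounded_linear.linear by blast
  show ?thesis
  proof (rule linearI)
    fix x y :: "(complex^'n) \<times> (complex^'n)"
    show "odeA Gam R t (x + y) = odeA Gam R t x + odeA Gam R t y"
      by (simp add: odeA_def linear_add[OF l1] linear_add[OF l2] algebra_simps)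
  next
    fix r :: real and x :: "(complex^'n) \<times> (complex^'n)"
    show "odeA Gam R t (r *\<^sub>R x) = r *\<^sub>R odeA Gam R t x"
      by (simp add: odeA_def linear_scale[OF l1] linear_scale[OF l2] algebra_simps)
  qed
qed

lemma odeA_bnd:
  fixes Gam R :: "real \<Rightarrow> real^'n^'n"
  assumes cG: "continuous_on UNIV Gam" "continuous_on UNIV (vd Gam)" "continuous_on UNIV R"
  shows "\<exists>K\<ge>0. \<forall>t\<in>{-T..T}. \<forall>x. norm (odeA Gam R t x) \<le> K * norm x"
proof -
  have c1: "continuous_on {-T..T} (\<lambda>t. msum (cmat (Gam t)))"
    by (intro cont_msum cont_cmat continuous_on_subset[OF cG(1)]) auto
  have c2: "continuous_on {-T..T} (\<lambda>t. msum (cmat (vd Gam t + Gam t ** Gam t - R t)))"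
    by (intro cont_msum cont_cmat continuous_intros cont_mm continuous_on_subset[OF cG(1)]
        continuous_on_subset[OF cG(2)] continuous_on_subset[OF cG(3)]) auto
  obtain a where a: "a \<ge> 0" "\<forall>t\<in>{-T..T}. msum (cmat (Gam t)) \<le> a" using cont_bound[OF c1] by blast
  obtain b where b: "b \<ge> 0" "\<forall>t\<in>{-T..T}. msum (cmat (vd Gam t + Gam t ** Gam t - R t)) \<le> b"
    using cont_bound[OF c2] by blast
  show ?thesis
  proof (intro exI[of _ "1 + 2 * a + b"] conjI ballI allI)
    show "0 \<le> 1 + 2 * a + b" using a b by simp
    fix t and x :: "(complex^'n) \<times> (complex^'n)" assume t: "t \<in> {-T..T}"
    obtain v w where x: "x = (v, w)" by (cases x)
    let ?G = "cmat (Gam t)" and ?C = "cmat (vd Gam t + Gam t ** Gam t - R t)"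
    have nv: "norm v \<le> norm x" and nw: "norm w \<le> norm x" using x norm_fst_le norm_snd_le by auto
    have "norm (?G *v w) \<le> msum ?G * norm w" by (rule mv_bound)
    also have "\<dots> \<le> a * norm x" using a t nw by (intro mult_mono) (auto simp: msum_def)
    finally have g: "norm (?G *v w) \<le> a * norm x" .
    have "norm (?C *v v) \<le> msum ?C * norm v" by (rule mv_bound)
    also have "\<dots> \<le> b * norm x" using b t nv by (intro mult_mono) (auto simp: msum_def)
    finally have c: "norm (?C *v v) \<le> b * norm x" .
    have "norm (odeA Gam R t x) \<le> norm w + norm (- ((2::complex) *s (?G *v w)) - ?C *v v)"
      unfolding x odeA_def by (simp add: norm_Pair_le)
    also have "\<dots> \<le> norm w + (2 * norm (?G *v w) + norm (?C *v v))"
      using norm_triangle_ineq4[of "- ((2::complex) *s (?G *v w))" "?C *v v"]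
      by (simp add: norm_smult_cvec)
    also have "\<dots> \<le> (1 + 2 * a + b) * norm x" using nw g c by (simp add: algebra_simps)
    finally show "norm (odeA Gam R t x) \<le> (1 + 2 * a + b) * norm x" .
  qed
qed

lemma odeA_cont:
  fixes Gam R :: "real \<Rightarrow> real^'n^'n"
  assumes cG: "continuous_on UNIV Gam" "continuous_on UNIV (vd Gam)" "continuous_on UNIV R"
    and x: "continuous_on S x"
  shows "continuous_on S (\<lambda>t. odeA Gam R t (x t))"
proof -
  have G: "continuous_on S (\<lambda>t. cmat (Gam t))"
    by (intro cont_cmat continuous_on_subset[OF cG(1)]) auto
  have C: "continuous_on S (\<lambda>t. cmat (vd Gam t + Gam t ** Gam t - R t))"
    by (intro cont_cmat continuous_intros cont_mm continuous_on_subset[OF cG(1)]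
        continuous_on_subset[OF cG(2)] continuous_on_subset[OF cG(3)]) auto
  have s: "continuous_on S (\<lambda>t. snd (x t))" and f: "continuous_on S (\<lambda>t. fst (x t))"
    using x by (auto intro: continuous_intros)
  have "continuous_on S (\<lambda>t. (2::complex) *s (cmat (Gam t) *v snd (x t)))"
    by (rule bounded_linear.continuous_on[OF bl_smult_cvec cont_mv[OF G s]])
  then show ?thesis unfolding odeA_def
    by (intro continuous_intros s cont_mv[OF C f])
qed

lemma jacobi_to_ode:
  fixes Gam R :: "real \<Rightarrow> real^'n^'n"
  assumes "jacobi_sol Gam R V"
  shows "(\<forall>t. (V has_vector_derivative vd V t) (at t)) \<and>
    (\<forall>t. ((\<lambda>t. (V t, vd V t)) has_vector_derivative odeA Gam R t (V t, vd V t)) (at t))"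
proof -
  obtain V1 V2 where H: "\<And>t. (V has_vector_derivative V1 t) (at t)" "\<And>t. (V1 has_vector_derivative V2 t) (at t)"
    "\<And>t. V2 t + (2::complex) *s (cmat (Gam t) *v V1 t) + cmat (vd Gam t + Gam t ** Gam t - R t) *v V t = 0"
    using assms unfolding jacobi_sol_def by blast
  have v: "vd V t = V1 t" for t using H(1) by (simp add: vector_derivative_at)
  have "V2 t = snd (odeA Gam R t (V t, V1 t))" for t
    using H(3)[of t] unfolding odeA_def by (simp add: eq_neg_iff_add_eq_0 algebra_simps)
  then have "((\<lambda>t. (V t, V1 t)) has_vector_derivative odeA Gam R t (V t, V1 t)) (at t)" for t
    using has_vector_derivative_Pair[OF H(1)[of t] H(2)[of t]] by (simp add: odeA_def)
  then show ?thesis using H(1) v by (simp add: fun_eq_iff[symmetric] ext)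
qed

lemma ode_to_jacobi:
  fixes Gam R :: "real \<Rightarrow> real^'n^'n"
  assumes "\<And>t. (x has_vector_derivative odeA Gam R t (x t)) (at t)"
  shows "jacobi_sol Gam R (\<lambda>t. fst (x t)) \<and> (\<forall>t. vd (\<lambda>t. fst (x t)) t = snd (x t))"
proof -
  have d1: "((\<lambda>t. fst (x t)) has_vector_derivative snd (x t)) (at t)" for t
    using bounded_linear.has_vector_derivative[OF bounded_linear_fst assms[of t]] by (simp add: odeA_def)
  have d2: "((\<lambda>t. snd (x t)) has_vector_derivative (- ((2::complex) *s (cmat (Gam t) *v snd (x t)))
      - cmat (vd Gam t + Gam t ** Gam t - R t) *v fst (x t))) (at t)" for t
    using bounded_linear.has_vector_derivative[OF bounded_linear_snd assms[of t]] by (simp add: odeA_def)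
  have "jacobi_sol Gam R (\<lambda>t. fst (x t))"
    unfolding jacobi_sol_def
    by (rule exI[of _ "\<lambda>t. snd (x t)"], rule exI[of _ "\<lambda>t. - ((2::complex) *s (cmat (Gam t) *v snd (x t)))
      - cmat (vd Gam t + Gam t ** Gam t - R t) *v fst (x t)"])
       (auto simp: d1 d2 odeA_def)
  then show ?thesis using d1 by (simp add: vector_derivative_at)
qed

lemma jac_unique:
  fixes Gam R :: "real \<Rightarrow> real^'n^'n"
  assumes cG: "continuous_on UNIV Gam" "continuous_on UNIV (vd Gam)" "continuous_on UNIV R"
    and J: "jacobi_sol Gam R V" and V0: "V 0 = 0" "vd V 0 = 0"
  shows "V t = 0"
proof -
  have "(\<lambda>t. (V t, vd V t)) t = 0"
    by (rule linear_ode_unique[OF odeA_bnd[OF cG]]) (use jacobi_to_ode[OF J] V0 in \<open>auto simp: zero_prod_def\<close>)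
  then show ?thesis by (simp add: zero_prod_def)
qed

lemma jac_exists:
  fixes Gam R :: "real \<Rightarrow> real^'n^'n"
  assumes cG: "continuous_on UNIV Gam" "continuous_on UNIV (vd Gam)" "continuous_on UNIV R"
  shows "\<exists>V. jacobi_sol Gam R V \<and> V 0 = v \<and> vd V 0 = w"
proof -
  obtain x where x: "x 0 = (v, w)" "\<And>t. (x has_vector_derivative odeA Gam R t (x t)) (at t)"
    using linear_ode_exists[OF odeA_linear odeA_bnd[OF cG] odeA_cont[OF cG], of "(v, w)"] by blast
  show ?thesis using ode_to_jacobi[OF x(2)] x(1) by (intro exI[of _ "\<lambda>t. fst (x t)"]) auto
qed




interpretation fs: vector_space "fscale :: complex \<Rightarrow> (real \<Rightarrow> complex^'n) \<Rightarrow> _"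
  by unfold_locales (simp_all add: fscale_def fun_eq_iff vec_eq_iff algebra_simps)

lemma cdim_fs: "cdim = fs.dim" by (simp add: cdim_def fun_eq_iff)
lemma csubspace_fs: "csubspace = fs.subspace" by (simp add: csubspace_def fun_eq_iff)

lemma sum_fun_apply: "(sum f A) x = sum (\<lambda>a. f a x) A"
  by (induct A rule: infinite_finite_induct) auto

lemma fscale_apply: "fscale c f t = c *s f t" by (simp add: fscale_def)

lemma indep_bound:
  fixes F :: "(real \<Rightarrow> complex^'n) \<Rightarrow> complex^'m"
  assumes S: "fs.subspace S" and add: "\<And>x y. x \<in> S \<Longrightarrow> y \<in> S \<Longrightarrow> F (x + y) = F x + F y"
    and sc: "\<And>c x. x \<in> S \<Longrightarrow> F (fscale c x) = c *s F x"
    and inj: "\<And>x. x \<in> S \<Longrightarrow> F x = 0 \<Longrightarrow> x = 0"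
    and B: "B \<subseteq> S" "fs.independent B"
  shows "finite B \<and> card B \<le> CARD('m)"
proof -
  have Fsum: "F (\<Sum>w\<in>T. fscale (u w) w) = (\<Sum>w\<in>T. u w *s F w) \<and> (\<Sum>w\<in>T. fscale (u w) w) \<in> S"
    if "finite T" "T \<subseteq> S" for T u
    using that
  proof (induction T rule: finite_induct)
    case empty
    have "F 0 = 0" using sc[of 0 0] fs.subspace_0[OF S] by simp
    then show ?case using fs.subspace_0[OF S] by (auto simp: zero_fun_def)
  next
    case (insert a T)
    then have aS: "fscale (u a) a \<in> S" using fs.subspace_scale[OF S] by auto
    have IH: "F (\<Sum>w\<in>T. fscale (u w) w) = (\<Sum>w\<in>T. u w *s F w)" "(\<Sum>w\<in>T. fscale (u w) w) \<in> S"
      using insert by auto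
    have e1: "(\<Sum>w\<in>insert a T. fscale (u w) w) = fscale (u a) a + (\<Sum>w\<in>T. fscale (u w) w)"
      by (rule sum.insert) (use insert in auto)
    have e2: "(\<Sum>w\<in>insert a T. u w *s F w) = u a *s F a + (\<Sum>w\<in>T. u w *s F w)"
      by (rule sum.insert) (use insert in auto)
    have aS': "a \<in> S" using insert by auto
    have "F (fscale (u a) a + (\<Sum>w\<in>T. fscale (u w) w)) = F (fscale (u a) a) + F (\<Sum>w\<in>T. fscale (u w) w)"
      by (rule add[OF aS IH(2)])
    also have "\<dots> = u a *s F a + (\<Sum>w\<in>T. u w *s F w)" unfolding sc[OF aS'] IH(1) ..
    finally show ?case unfolding e1 e2 using fs.subspace_add[OF S aS IH(2)] by blast
  qed
  have injB: "inj_on F B"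
  proof (rule inj_onI)
    fix x y assume xy: "x \<in> B" "y \<in> B" "F x = F y"
    then have xS: "x \<in> S" and yS: "y \<in> S" using B by auto
    have myS: "fscale (-1) y \<in> S" using fs.subspace_scale[OF S yS] .
    have "F (x + fscale (-1) y) = 0" using add[OF xS myS] sc[OF yS, of "-1"] xy(3) by simp
    then have "x + fscale (-1) y = 0" using inj fs.subspace_add[OF S xS myS] by blast
    then show "x = y" by (simp add: fun_eq_iff fscale_def)
  qed
  have "vec.independent (F ` B)"
    unfolding vec.independent_explicit_finite_subsets
  proof (intro allI impI ballI)
    fix T u v assume T: "T \<subseteq> F ` B" "finite T" and s: "(\<Sum>v\<in>T. u v *s v) = 0" and v: "v \<in> T"
    define T' where "T' = B \<inter> F -` T"
    have TT': "T = F ` T'" using T(1) unfolding T'_def by auto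
    have injT': "inj_on F T'" using injB inj_on_subset T'_def by blast
    have finT': "finite T'" using T(2) TT' injT' finite_image_iff by blast
    have T'S: "T' \<subseteq> S" using B T'_def by auto
    have "(\<Sum>w\<in>T'. u (F w) *s F w) = 0" using s TT' injT' by (simp add: sum.reindex)
    then have "F (\<Sum>w\<in>T'. fscale (u (F w)) w) = 0" using Fsum[OF finT' T'S] by simp
    then have "(\<Sum>w\<in>T'. fscale (u (F w)) w) = 0" by (rule inj[OF conjunct2[OF Fsum[OF finT' T'S]]])
    moreover obtain w where w: "w \<in> T'" "v = F w" using v TT' by auto
    ultimately have "(\<lambda>w. u (F w)) w = 0"
      using fs.independentD[OF B(2) finT', of "\<lambda>w. u (F w)"] T'_def by auto
    then show "u v = 0" using w by simp
  qed
  then have "finite (F ` B)" and "card (F ` B) \<le> CARD('m)"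
    using vec.finiteI_independent vec.independent_card_le_dim[of "F ` B" UNIV]
    by (auto simp: vec.dim_UNIV card_cart_basis)
  then show ?thesis using injB finite_image_iff card_image by metis
qed

lemma indep_union:
  assumes W: "fs.subspace W" and N: "fs.subspace N" and WN: "\<And>x. x \<in> W \<Longrightarrow> x \<in> N \<Longrightarrow> x = 0"
    and BW: "BW \<subseteq> W" "fs.independent BW" and BN: "BN \<subseteq> N" "fs.independent BN"
  shows "fs.independent (BW \<union> BN) \<and> BW \<inter> BN = {}"
proof
  show "BW \<inter> BN = {}"
  proof (rule ccontr)
    assume "BW \<inter> BN \<noteq> {}"
    then obtain x where x: "x \<in> BW" "x \<in> BN" by auto
    then have "x = 0" using BW BN WN by auto
    then show False using fs.dependent_zero x BW(2) by blast
  qed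
  then have disj: "BW \<inter> BN = {}" .
  show "fs.independent (BW \<union> BN)"
    unfolding fs.independent_explicit_finite_subsets
  proof (intro allI impI ballI)
    fix T u v assume T: "T \<subseteq> BW \<union> BN" "finite T" and s: "(\<Sum>v\<in>T. fscale (u v) v) = 0" and v: "v \<in> T"
    define T1 where "T1 = T \<inter> BW"
    define T2 where "T2 = T \<inter> BN"
    have TU: "T = T1 \<union> T2" and dj: "T1 \<inter> T2 = {}" using T disj unfolding T1_def T2_def by auto
    have f1: "finite T1" "finite T2" using T(2) T1_def T2_def by auto
    define x where "x = (\<Sum>v\<in>T1. fscale (u v) v)"
    define y where "y = (\<Sum>v\<in>T2. fscale (u v) v)"
    have xy: "x + y = 0" using s unfolding x_def y_def TU by (simp add: sum.union_disjoint[OF f1 dj])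
    have xW: "x \<in> W" unfolding x_def
      by (rule fs.subspace_sum[OF W]) (use BW T1_def fs.subspace_scale[OF W] in blast)
    have yN: "y \<in> N" unfolding y_def
      by (rule fs.subspace_sum[OF N]) (use BN T2_def fs.subspace_scale[OF N] in blast)
    have "x = - y" using xy by (simp add: eq_neg_iff_add_eq_0)
    then have "x \<in> N" using fs.subspace_neg[OF N yN] by simp
    then have x0: "x = 0" using WN xW by blast
    then have y0: "y = 0" using xy by simp
    show "u v = 0"
    proof (cases "v \<in> T1")
      case True
      then show ?thesis using fs.independentD[OF BW(2) f1(1) _ x0[unfolded x_def]] T1_def by auto
    next
      case False
      then have "v \<in> T2" using v TU by auto
      then show ?thesis using fs.independentD[OF BN(2) f1(2) _ y0[unfolded y_def]] T2_def by auto
    qed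
  qed
qed




lemma mv_add: "(M::complex^'n^'m) *v (x + y) = M *v x + M *v y"
  by (simp add: vec_eq_iff matrix_vector_mult_def sum.distrib algebra_simps)
lemma mv_scale: "(M::complex^'n^'m) *v (c *s x) = c *s (M *v x)"
  by (simp add: vec_eq_iff matrix_vector_mult_def sum_distrib_left algebra_simps)
lemma sm_add: "(c::complex) *s (x + y) = c *s x + c *s (y::complex^'n)"
  by (simp add: vec_eq_iff algebra_simps)
lemma sm_comm: "(c::complex) *s (d *s (x::complex^'n)) = d *s (c *s x)"
  by (simp add: vec_eq_iff algebra_simps)

lemma sol_vd: "jacobi_sol Gam R V \<Longrightarrow> (V has_vector_derivative vd V t) (at t)"
  using jacobi_to_ode by blast

lemma sol_zero: "jacobi_sol Gam R 0"
  unfolding jacobi_sol_def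
  by (rule exI[of _ "\<lambda>t. 0"], rule exI[of _ "\<lambda>t. 0"]) (auto simp: zero_fun_def vec_eq_iff matrix_vector_mult_def)

lemma sol_add:
  assumes "jacobi_sol Gam R V" "jacobi_sol Gam R W"
  shows "jacobi_sol Gam R (V + W)"
proof -
  obtain V1 V2 where V: "\<And>t. (V has_vector_derivative V1 t) (at t)" "\<And>t. (V1 has_vector_derivative V2 t) (at t)"
    "\<And>t. V2 t + (2::complex) *s (cmat (Gam t) *v V1 t) + cmat (vd Gam t + Gam t ** Gam t - R t) *v V t = 0"
    using assms(1) unfolding jacobi_sol_def by blast
  obtain W1 W2 where W: "\<And>t. (W has_vector_derivative W1 t) (at t)" "\<And>t. (W1 has_vector_derivative W2 t) (at t)"
    "\<And>t. W2 t + (2::complex) *s (cmat (Gam t) *v W1 t) + cmat (vd Gam t + Gam t ** Gam t - R t) *v W t = 0"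
    using assms(2) unfolding jacobi_sol_def by blast
  show ?thesis unfolding jacobi_sol_def
  proof (rule exI[of _ "\<lambda>t. V1 t + W1 t"], rule exI[of _ "\<lambda>t. V2 t + W2 t"], intro allI conjI)
    fix t
    show "(V + W has_vector_derivative V1 t + W1 t) (at t)"
      using has_vector_derivative_add[OF V(1) W(1)] by (simp add: plus_fun_def)
    show "((\<lambda>t. V1 t + W1 t) has_vector_derivative V2 t + W2 t) (at t)"
      using has_vector_derivative_add[OF V(2) W(2)] by simp
    have "V2 t + W2 t + (2::complex) *s (cmat (Gam t) *v (V1 t + W1 t)) + cmat (vd Gam t + Gam t ** Gam t - R t) *v (V + W) t
      = (V2 t + (2::complex) *s (cmat (Gam t) *v V1 t) + cmat (vd Gam t + Gam t ** Gam t - R t) *v V t)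
      + (W2 t + (2::complex) *s (cmat (Gam t) *v W1 t) + cmat (vd Gam t + Gam t ** Gam t - R t) *v W t)"
      by (simp add: mv_add sm_add algebra_simps)
    then show "V2 t + W2 t + (2::complex) *s (cmat (Gam t) *v (V1 t + W1 t)) + cmat (vd Gam t + Gam t ** Gam t - R t) *v (V + W) t = 0"
      using V(3)[of t] W(3)[of t] by simp
  qed
qed

lemma sol_scale:
  assumes "jacobi_sol Gam R V"
  shows "jacobi_sol Gam R (fscale c V)"
proof -
  obtain V1 V2 where V: "\<And>t. (V has_vector_derivative V1 t) (at t)" "\<And>t. (V1 has_vector_derivative V2 t) (at t)"
    "\<And>t. V2 t + (2::complex) *s (cmat (Gam t) *v V1 t) + cmat (vd Gam t + Gam t ** Gam t - R t) *v V t = 0"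
    using assms(1) unfolding jacobi_sol_def by blast
  show ?thesis unfolding jacobi_sol_def
  proof (rule exI[of _ "\<lambda>t. c *s V1 t"], rule exI[of _ "\<lambda>t. c *s V2 t"], intro allI conjI)
    fix t
    show "(fscale c V has_vector_derivative c *s V1 t) (at t)"
      using bounded_linear.has_vector_derivative[OF bl_smult_cvec V(1)] by (simp add: fscale_def)
    show "((\<lambda>t. c *s V1 t) has_vector_derivative c *s V2 t) (at t)"
      using bounded_linear.has_vector_derivative[OF bl_smult_cvec V(2)] by simp
    have "c *s V2 t + (2::complex) *s (cmat (Gam t) *v (c *s V1 t)) + cmat (vd Gam t + Gam t ** Gam t - R t) *v fscale c V t
      = c *s (V2 t + (2::complex) *s (cmat (Gam t) *v V1 t) + cmat (vd Gam t + Gam t ** Gam t - R t) *v V t)"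
      by (simp add: mv_scale sm_add fscale_def sm_comm)
    then show "c *s V2 t + (2::complex) *s (cmat (Gam t) *v (c *s V1 t)) + cmat (vd Gam t + Gam t ** Gam t - R t) *v fscale c V t = 0"
      using V(3)[of t] by simp
  qed
qed

lemma vd_add:
  assumes "jacobi_sol Gam R V" "jacobi_sol Gam R W" shows "vd (V + W) t = vd V t + vd W t"
proof -
  have "(V has_vector_derivative vd V t) (at t)" "(W has_vector_derivative vd W t) (at t)"
    using sol_vd[OF assms(1)] sol_vd[OF assms(2)] by auto
  from has_vector_derivative_add[OF this] show ?thesis
    by (simp add: vector_derivative_at plus_fun_def)
qed

lemma vd_scale:
  assumes "jacobi_sol Gam R V" shows "vd (fscale c V) t = c *s vd V t"
proof -
  have "(V has_vector_derivative vd V t) (at t)" using sol_vd[OF assms(1)] by auto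
  from bounded_linear.has_vector_derivative[OF bl_smult_cvec this, of c] show ?thesis
    by (simp add: vector_derivative_at fscale_def)
qed

lemma vd_zero: "vd (0::real \<Rightarrow> complex^'n) t = 0"
  by (simp add: zero_fun_def vector_derivative_at)

lemma sol_subspace: "fs.subspace {V. jacobi_sol Gam R V}"
  by (rule fs.subspaceI) (auto intro: sol_zero sol_add sol_scale)

lemma N0_subspace: "fs.subspace {V. jacobi_sol Gam R V \<and> V 0 = 0 \<and> V 1 = 0}"
  by (rule fs.subspaceI) (auto intro: sol_zero sol_add sol_scale sol_scale[unfolded fscale_def] simp: fscale_def)

lemma J2_subspace: "fs.subspace (J2 Gam R z)"
  unfolding J2_def
  by (rule fs.subspaceI) (auto intro: sol_zero sol_add sol_scale sol_scale[unfolded fscale_def] simp: fscale_def sm_add sm_comm)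

lemma sol_uniq:
  fixes Gam R :: "real \<Rightarrow> real^'n^'n"
  assumes cG: "continuous_on UNIV Gam" "continuous_on UNIV (vd Gam)" "continuous_on UNIV R"
    and U: "jacobi_sol Gam R U" and V: "jacobi_sol Gam R V" and e: "U 0 = V 0" "vd U 0 = vd V 0"
  shows "U = V"
proof -
  let ?D = "U + fscale (-1) V"
  have D: "jacobi_sol Gam R ?D" using sol_add[OF U sol_scale[OF V]] .
  have "vd ?D 0 = vd U 0 + (-1) *s vd V 0"
    using vd_add[OF U sol_scale[OF V, of "-1"], of 0] vd_scale[OF V, of "-1" 0] by (simp only:)
  also have "\<dots> = 0" using e by (simp add: vec_eq_iff)
  finally have d0: "vd ?D 0 = 0" .
  have D0: "?D 0 = 0" using e by (simp only: plus_fun_apply fscale_apply) (simp add: vec_eq_iff)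
  have "?D t = 0" for t using jac_unique[OF cG D D0 d0] .
  then have "U t + (-1) *s V t = 0" for t by (simp only: plus_fun_apply fscale_apply)
  then show ?thesis by (auto simp: fun_eq_iff vec_eq_iff)
qed




lemma shift_deriv:
  assumes "(f has_vector_derivative f') (at (t + 1))"
  shows "((\<lambda>s. f (s + 1)) has_vector_derivative f') (at t)"
proof -
  have "((\<lambda>s::real. s + 1) has_vector_derivative 1) (at t)"
    by (auto intro!: derivative_eq_intros simp: has_real_derivative_iff_has_vector_derivative[symmetric])
  from vector_diff_chain_at[OF this, of f f'] assms show ?thesis by (simp add: o_def)
qed

lemma sol_shift:
  fixes Gam R :: "real \<Rightarrow> real^'n^'n"
  assumes per: "\<And>t. Gam (t + 1) = Gam t" "\<And>t. R (t + 1) = R t"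
    and dG: "\<And>t. (Gam has_vector_derivative vd Gam t) (at t)"
    and J: "jacobi_sol Gam R V"
  shows "jacobi_sol Gam R (\<lambda>t. V (t + 1)) \<and> (\<forall>t. vd (\<lambda>t. V (t + 1)) t = vd V (t + 1))"
proof -
  have vdG: "vd Gam (t + 1) = vd Gam t" for t
  proof -
    have "((\<lambda>s. Gam (s + 1)) has_vector_derivative vd Gam (t + 1)) (at t)" by (rule shift_deriv[OF dG])
    then have "(Gam has_vector_derivative vd Gam (t + 1)) (at t)" using per(1) by simp
    then show ?thesis by (simp add: vector_derivative_at)
  qed
  obtain V1 V2 where V: "\<And>t. (V has_vector_derivative V1 t) (at t)" "\<And>t. (V1 has_vector_derivative V2 t) (at t)"
    "\<And>t. V2 t + (2::complex) *s (cmat (Gam t) *v V1 t) + cmat (vd Gam t + Gam t ** Gam t - R t) *v V t = 0"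
    using J unfolding jacobi_sol_def by blast
  have d1: "((\<lambda>t. V (t + 1)) has_vector_derivative V1 (t + 1)) (at t)" for t by (rule shift_deriv[OF V(1)])
  have d2: "((\<lambda>t. V1 (t + 1)) has_vector_derivative V2 (t + 1)) (at t)" for t by (rule shift_deriv[OF V(2)])
  have "jacobi_sol Gam R (\<lambda>t. V (t + 1))"
    unfolding jacobi_sol_def
  proof (rule exI[of _ "\<lambda>t. V1 (t + 1)"], rule exI[of _ "\<lambda>t. V2 (t + 1)"], intro allI conjI d1 d2)
    fix t show "V2 (t + 1) + (2::complex) *s (cmat (Gam t) *v V1 (t + 1)) + cmat (vd Gam t + Gam t ** Gam t - R t) *v V (t + 1) = 0"
      using V(3)[of "t + 1"] by (simp add: per vdG)
  qed
  moreover have "vd (\<lambda>t. V (t + 1)) t = vd V (t + 1)" for t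
    using d1[of t] V(1)[of "t+1"] by (simp add: vector_derivative_at)
  ultimately show ?thesis by blast
qed

lemma zero_sol_data: "vd (\<lambda>t::real. 0::complex^'n) 0 = 0"
  by (simp add: vector_derivative_at)

lemma eig_of_sol:
  fixes Gam R :: "real \<Rightarrow> real^'n^'n"
  assumes cG: "continuous_on UNIV Gam" "continuous_on UNIV (vd Gam)" "continuous_on UNIV R"
    and J: "jacobi_sol Gam R V" and nz: "V \<noteq> 0"
    and e1: "V 1 = z *s V 0" and e2: "vd V 1 = z *s vd V 0"
  shows "poincare_eigenvalue Gam R z"
proof -
  let ?G0 = "cmat (Gam 0)"
  define v where "v = V 0"
  define w where "w = vd V 0 + ?G0 *v V 0"
  have the: "(THE U. jacobi_sol Gam R U \<and> U 0 = fst (v, w) \<and> vd U 0 = snd (v, w) - ?G0 *v fst (v, w)) = V"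
  proof (rule the_equality)
    show "jacobi_sol Gam R V \<and> V 0 = fst (v, w) \<and> vd V 0 = snd (v, w) - ?G0 *v fst (v, w)"
      using J by (simp add: v_def w_def)
    fix U assume "jacobi_sol Gam R U \<and> U 0 = fst (v, w) \<and> vd U 0 = snd (v, w) - ?G0 *v fst (v, w)"
    then show "U = V" by (intro sol_uniq[OF cG _ J]) (auto simp: v_def w_def)
  qed
  have "poincare Gam R (v, w) = (V 1, vd V 1 + ?G0 *v V 1)"
    unfolding poincare_def Let_def the ..
  also have "\<dots> = (z *s v, z *s w)"
    by (simp add: e1 e2 v_def w_def mv_scale sm_add)
  finally have P: "poincare Gam R (v, w) = (z *s v, z *s w)" .
  have "(v, w) \<noteq> (0, 0)"
  proof
    assume "(v, w) = (0, 0)"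
    then have "V 0 = 0" "vd V 0 = 0" by (auto simp: v_def w_def)
    then have "V = (\<lambda>t. 0)" using sol_uniq[OF cG J sol_zero] by (simp add: zero_fun_def zero_sol_data)
    then show False using nz by (simp add: zero_fun_def)
  qed
  then show ?thesis unfolding poincare_eigenvalue_def using P by blast
qed

lemma eig_to_shift:
  fixes Gam R :: "real \<Rightarrow> real^'n^'n"
  assumes cG: "continuous_on UNIV Gam" "continuous_on UNIV (vd Gam)" "continuous_on UNIV R"
    and per: "\<And>t. Gam (t + 1) = Gam t" "\<And>t. R (t + 1) = R t"
    and dG: "\<And>t. (Gam has_vector_derivative vd Gam t) (at t)"
    and eig: "poincare_eigenvalue Gam R z"
  shows "\<exists>V. jacobi_sol Gam R V \<and> V \<noteq> 0 \<and> (\<forall>t. V (t + 1) = z *s V t)"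
proof -
  let ?G0 = "cmat (Gam 0)"
  obtain v w where vw: "(v, w) \<noteq> (0, 0)" "poincare Gam R (v, w) = (z *s v, z *s w)"
    using eig unfolding poincare_eigenvalue_def by blast
  obtain V where V: "jacobi_sol Gam R V" "V 0 = v" "vd V 0 = w - ?G0 *v v"
    using jac_exists[OF cG] by blast
  have the: "(THE U. jacobi_sol Gam R U \<and> U 0 = fst (v, w) \<and> vd U 0 = snd (v, w) - ?G0 *v fst (v, w)) = V"
  proof (rule the_equality)
    show "jacobi_sol Gam R V \<and> V 0 = fst (v, w) \<and> vd V 0 = snd (v, w) - ?G0 *v fst (v, w)"
      using V by simp
    fix U assume "jacobi_sol Gam R U \<and> U 0 = fst (v, w) \<and> vd U 0 = snd (v, w) - ?G0 *v fst (v, w)"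
    then show "U = V" by (intro sol_uniq[OF cG _ V(1)]) (use V in auto)
  qed
  have "(V 1, vd V 1 + ?G0 *v V 1) = (z *s v, z *s w)"
    using vw(2) unfolding poincare_def Let_def the .
  then have p1: "V 1 = z *s v" and p2: "vd V 1 + ?G0 *v V 1 = z *s w" by auto
  have e1: "V 1 = z *s V 0" using p1 V(2) by simp
  have "vd V 1 = z *s w - ?G0 *v V 1" using p2 by (simp add: eq_diff_eq)
  also have "\<dots> = z *s (w - ?G0 *v v)" unfolding p1 mv_scale by (simp add: vec_eq_iff algebra_simps)
  also have "\<dots> = z *s vd V 0" using V(3) by simp
  finally have e2: "vd V 1 = z *s vd V 0" .
  have nz: "V \<noteq> 0"
  proof
    assume "V = 0"
    then have "v = 0" "w - ?G0 *v v = 0" using V by (auto simp: vd_zero)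
    then show False using vw(1) by (simp add: vec_eq_iff matrix_vector_mult_def)
  qed
  have S: "jacobi_sol Gam R (\<lambda>t. V (t + 1))" "vd (\<lambda>t. V (t + 1)) 0 = vd V 1"
    using sol_shift[OF per dG V(1)] by auto
  have "(\<lambda>t. V (t + 1)) = fscale z V"
  proof (rule sol_uniq[OF cG S(1) sol_scale[OF V(1)]])
    show "V (0 + 1) = fscale z V 0" using e1 by (simp add: fscale_def)
    show "vd (\<lambda>t. V (t + 1)) 0 = vd (fscale z V) 0" using S(2) e2 vd_scale[OF V(1)] by simp
  qed
  then show ?thesis using V(1) nz by (intro exI[of _ V]) (auto simp: fun_eq_iff fscale_def)
qed

lemma eig_indep:
  fixes Vk :: "nat \<Rightarrow> real \<Rightarrow> complex^'n" and lam :: "nat \<Rightarrow> complex"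
  assumes "finite K" "inj_on lam K" "\<forall>k\<in>K. Vk k \<noteq> 0 \<and> (\<forall>t. Vk k (t + 1) = lam k *s Vk k t)"
  shows "(\<forall>t. (\<Sum>k\<in>K. c k *s Vk k t) = 0) \<Longrightarrow> \<forall>k\<in>K. c k = 0"
  using assms
proof (induction K arbitrary: c rule: finite_induct)
  case empty then show ?case by simp
next
  case (insert a K)
  have H: "c a *s Vk a t + (\<Sum>k\<in>K. c k *s Vk k t) = 0" for t
    using insert.prems(1) insert.hyps by (simp add: sum.insert)
  have sh: "Vk k (t + 1) = lam k *s Vk k t" if "k \<in> insert a K" for k t using insert.prems(3) that by blast
  have "(\<Sum>k\<in>K. (c k * (lam k - lam a)) *s Vk k t) = 0" for t
  proof -
    have H1: "c a *s (lam a *s Vk a t) + (\<Sum>k\<in>K. c k *s (lam k *s Vk k t)) = 0"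
      using H[of "t + 1"] sh by simp
    have "(\<Sum>k\<in>K. (c k * (lam k - lam a)) *s Vk k t)
        = (\<Sum>k\<in>K. c k *s (lam k *s Vk k t)) - lam a *s (\<Sum>k\<in>K. c k *s Vk k t)"
      by (simp add: vec_eq_iff sum_component sum_distrib_left sum_subtractf algebra_simps)
    also have "\<dots> = 0"
    proof -
      have X: "(\<Sum>k\<in>K. c k *s (lam k *s Vk k t)) = - (c a *s (lam a *s Vk a t))"
        by (rule sym[OF minus_unique[OF H1]])
      have Y: "(\<Sum>k\<in>K. c k *s Vk k t) = - (c a *s Vk a t)"
        by (rule sym[OF minus_unique[OF H[of t]]])
      show ?thesis unfolding X Y by (simp add: vec_eq_iff algebra_simps)
    qed
    finally show ?thesis .
  qed
  then have "\<forall>k\<in>K. c k * (lam k - lam a) = 0"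
    using insert.IH[of "\<lambda>k. c k * (lam k - lam a)"] insert.prems by (auto simp: inj_on_def)
  moreover have "lam k \<noteq> lam a" if "k \<in> K" for k
    using insert.prems(2) insert.hyps that by (auto simp: inj_on_def)
  ultimately have cK: "\<forall>k\<in>K. c k = 0" by auto
  then have "c a *s Vk a t = 0" for t using H[of t] by simp
  moreover obtain t where "Vk a t \<noteq> 0" using insert.prems(3) by (auto simp: fun_eq_iff)
  ultimately have "c a = 0" by (metis vector_mul_eq_0)
  then show ?case using cK by simp
qed




definition pmap :: "(real \<Rightarrow> complex^'n) \<Rightarrow> complex^('n \<times> bool)" where
  "pmap V = (\<chi> p. if snd p then V 0 $ fst p else vd V 0 $ fst p)"

lemma card_nb: "CARD('n::finite \<times> bool) = 2 * CARD('n)"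
  by (simp add: UNIV_Times_UNIV[symmetric] card_cartesian_product del: UNIV_Times_UNIV)

lemma sol_bound:
  fixes Gam R :: "real \<Rightarrow> real^'n^'n"
  assumes cG: "continuous_on UNIV Gam" "continuous_on UNIV (vd Gam)" "continuous_on UNIV R"
    and B: "B \<subseteq> {V. jacobi_sol Gam R V}" "fs.independent B"
  shows "finite B \<and> card B \<le> 2 * CARD('n)"
proof -
  have "finite B \<and> card B \<le> CARD('n \<times> bool)"
  proof (rule indep_bound[OF sol_subspace, where F=pmap])
    fix x y assume "x \<in> {V. jacobi_sol Gam R V}" "y \<in> {V. jacobi_sol Gam R V}"
    then show "pmap (x + y) = pmap x + pmap y"
      by (simp add: pmap_def vec_eq_iff vd_add)
  next
    fix c x assume "x \<in> {V. jacobi_sol Gam R V}"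
    then show "pmap (fscale c x) = c *s pmap x"
      by (simp add: pmap_def vec_eq_iff vd_scale fscale_apply)
  next
    fix x assume x: "x \<in> {V. jacobi_sol Gam R V}" and p: "pmap x = 0"
    have "x 0 = 0" "vd x 0 = 0" using p
      by (auto simp: pmap_def vec_eq_iff) (metis (full_types) fst_conv snd_conv)+
    then show "x = 0" using sol_uniq[OF cG _ sol_zero, of x] x by (simp add: vd_zero)
  qed (use B in auto)
  then show ?thesis by (simp add: card_nb)
qed

lemma n0_le:
  fixes Gam R :: "real \<Rightarrow> real^'n^'n"
  assumes cG: "continuous_on UNIV Gam" "continuous_on UNIV (vd Gam)" "continuous_on UNIV R"
  shows "n0 Gam R \<le> CARD('n)"
proof -
  let ?N = "{V. jacobi_sol Gam R V \<and> V 0 = 0 \<and> V 1 = 0}"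
  obtain BN where BN: "BN \<subseteq> ?N" "fs.independent BN" "?N \<subseteq> fs.span BN" "card BN = fs.dim ?N"
    using fs.basis_exists by blast
  have "finite BN \<and> card BN \<le> CARD('n)"
  proof (rule indep_bound[OF N0_subspace, where F="\<lambda>V. vd V 0"])
    fix x y assume xy: "x \<in> ?N" "y \<in> ?N"
    then have "jacobi_sol Gam R x" "jacobi_sol Gam R y" by auto
    then show "vd (x + y) 0 = vd x 0 + vd y 0" by (rule vd_add)
  next
    fix c x assume "x \<in> ?N" then show "vd (fscale c x) 0 = c *s vd x 0" by (auto simp: vd_scale)
  next
    fix x assume x: "x \<in> ?N" "vd x 0 = 0"
    then show "x = 0" using sol_uniq[OF cG _ sol_zero, of x] by (simp add: vd_zero)
  qed (use BN in auto)
  then show ?thesis using BN(4) by (simp add: n0_def cdim_fs)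
qed

lemma part_bound:
  fixes Gam R :: "real \<Rightarrow> real^'n^'n"
  assumes cG: "continuous_on UNIV Gam" "continuous_on UNIV (vd Gam)" "continuous_on UNIV R"
    and W: "csubspace W" "W \<subseteq> J2 Gam R z" and neg: "\<forall>V\<in>W. V \<noteq> 0 \<longrightarrow> Re (bform eps z V V) < 0"
  shows "cdim W + n0 Gam R \<le> 2 * CARD('n)"
    and "cmod z = 1 \<Longrightarrow> \<not> poincare_eigenvalue Gam R z \<Longrightarrow> cdim W + n0 Gam R \<le> CARD('n)"
proof -
  let ?N = "{V. jacobi_sol Gam R V \<and> V 0 = 0 \<and> V 1 = 0}"
  have Ws: "fs.subspace W" using W(1) by (simp add: csubspace_fs)
  obtain BN where BN: "BN \<subseteq> ?N" "fs.independent BN" "?N \<subseteq> fs.span BN" "card BN = fs.dim ?N"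
    using fs.basis_exists by blast
  obtain BW where BW: "BW \<subseteq> W" "fs.independent BW" "W \<subseteq> fs.span BW" "card BW = fs.dim W"
    using fs.basis_exists by blast
  have WN: "x = 0" if "x \<in> W" "x \<in> ?N" for x
  proof (rule ccontr)
    assume "x \<noteq> 0"
    then have "Re (bform eps z x x) < 0" using neg that by blast
    moreover have "bform eps z x x = 0" using that by (simp add: bform_def Gform_def)
    ultimately show False by simp
  qed
  have U: "fs.independent (BW \<union> BN)" "BW \<inter> BN = {}"
    using indep_union[OF Ws N0_subspace WN BW(1,2) BN(1,2)] by auto
  have J2sol: "J2 Gam R z \<subseteq> {V. jacobi_sol Gam R V}" by (auto simp: J2_def)
  have NJ2: "?N \<subseteq> J2 Gam R z" by (auto simp: J2_def)
  have sub: "BW \<union> BN \<subseteq> J2 Gam R z" using BW(1) BN(1) W(2) NJ2 by blast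
  have fin: "finite (BW \<union> BN)" and c1: "card (BW \<union> BN) \<le> 2 * CARD('n)"
    using sol_bound[OF cG _ U(1)] sub J2sol by auto
  have cardU: "card (BW \<union> BN) = cdim W + n0 Gam R"
    using card_Un_disjoint[of BW BN] fin U(2) BW(4) BN(4) by (simp add: n0_def cdim_fs)
  show "cdim W + n0 Gam R \<le> 2 * CARD('n)" using c1 cardU by simp
  assume z1: "cmod z = 1" and ne: "\<not> poincare_eigenvalue Gam R z"
  have zz: "z * cnj z = 1" using complex_norm_square[of z] z1 by simp
  have "finite (BW \<union> BN) \<and> card (BW \<union> BN) \<le> CARD('n)"
  proof (rule indep_bound[OF J2_subspace, where F="\<lambda>V. cnj z *s vd V 1 - vd V 0"])
    fix x y assume "x \<in> J2 Gam R z" "y \<in> J2 Gam R z"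
    then show "cnj z *s vd (x + y) 1 - vd (x + y) 0 = (cnj z *s vd x 1 - vd x 0) + (cnj z *s vd y 1 - vd y 0)"
      by (auto simp: J2_def vd_add vec_eq_iff algebra_simps)
  next
    fix c x assume "x \<in> J2 Gam R z"
    then show "cnj z *s vd (fscale c x) 1 - vd (fscale c x) 0 = c *s (cnj z *s vd x 1 - vd x 0)"
      by (auto simp: J2_def vd_scale vec_eq_iff algebra_simps)
  next
    fix x assume x: "x \<in> J2 Gam R z" and e: "cnj z *s vd x 1 - vd x 0 = 0"
    have xs: "jacobi_sol Gam R x" "x 1 = z *s x 0" using x by (auto simp: J2_def)
    have "vd x 1 = z *s vd x 0"
    proof -
      have "vd x 0 = cnj z *s vd x 1" using e by simp
      then have "z *s vd x 0 = (z * cnj z) *s vd x 1" by (simp add: vector_smult_assoc)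
      then show ?thesis using zz by simp
    qed
    then show "x = 0" using eig_of_sol[OF cG xs(1) _ xs(2)] ne by blast
  qed (use sub U(1) in auto)
  then show "cdim W + n0 Gam R \<le> CARD('n)" using cardU by simp
qed

lemma nminus_le:
  fixes Gam R :: "real \<Rightarrow> real^'n^'n"
  assumes "\<And>W. csubspace W \<Longrightarrow> W \<subseteq> J2 Gam R z \<Longrightarrow> (\<forall>V\<in>W. V \<noteq> 0 \<longrightarrow> Re (bform eps z V V) < 0)
      \<Longrightarrow> cdim W + m \<le> b"
  shows "n_minus eps Gam R z + m \<le> b"
proof -
  let ?D = "{d. \<exists>W. csubspace W \<and> W \<subseteq> J2 Gam R z \<and> cdim W = d \<and> (\<forall>V\<in>W. V \<noteq> 0 \<longrightarrow> Re (bform eps z V V) < 0)}"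
  have z0: "csubspace {0::real \<Rightarrow> complex^'n}" by (simp add: csubspace_fs)
  have z1: "{0} \<subseteq> J2 Gam R z" by (simp add: J2_def sol_zero)
  have "cdim {0::real \<Rightarrow> complex^'n} \<in> ?D" using z0 z1 by blast
  then have ne: "?D \<noteq> {}" by blast
  have mb: "m \<le> b" using assms[OF z0 z1] by simp
  have "Sup ?D \<le> b - m"
    by (rule cSup_least[OF ne]) (use assms in force)
  then show ?thesis using mb by (simp add: n_minus_def neg_index_def)
qed

lemma omega_norm: "cmod (exp (2 * pi * \<i> / of_nat N) ^ k) = 1"
  by (simp add: norm_power)

lemma omega_inj:
  assumes N: "N \<ge> 1"
  shows "inj_on (\<lambda>k. exp (2 * pi * \<i> / of_nat N) ^ k) {..<N}"
proof -
  let ?w = "exp (2 * pi * \<i> / of_nat N)"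
  have key: False if jk: "j < k" "k < N" "?w ^ j = ?w ^ k" for j k
  proof -
    define d where "d = k - j"
    have d: "0 < d" "d < N" using jk by (auto simp: d_def)
    have kk: "k = j + d" using jk by (simp add: d_def)
    have "?w ^ k = ?w ^ j * ?w ^ d" by (simp only: kk power_add)
    then have "?w ^ d = 1" using jk(3) by simp
    then have "exp (of_nat d * (2 * pi * \<i> / of_nat N)) = 1" by (simp only: exp_of_nat_mult)
    then obtain m :: int where m: "of_nat d * (2 * pi / of_nat N) = of_int (2 * m) * pi"
      by (auto simp: exp_eq_1)
    then have "real d = real_of_int m * real N" using N by (simp add: field_simps)
    then have "real d = real_of_int (m * int N)" by simp
    then have "int d = m * int N" by linarith
    moreover have "m \<ge> 1" using d \<open>int d = m * int N\<close>
      by (metis int_ops(1) less_le mult_eq_0_iff of_nat_0_less_iff zero_less_mult_iff zle_add1_eq_le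
          of_nat_le_0_iff linorder_not_less add_0 le_neq_implies_less pos_zmult_eq_1_iff_lemma)
    ultimately have "int d \<ge> int N" by (simp add: mult_le_cancel_right1)
    then show False using d by simp
  qed
  show ?thesis
  proof (rule inj_onI)
    fix j k assume "j \<in> {..<N}" "k \<in> {..<N}" "?w ^ j = ?w ^ k"
    then show "j = k" using key[of j k] key[of k j] by (cases j k rule: linorder_cases) auto
  qed
qed




lemma eig_card:
  fixes Gam R :: "real \<Rightarrow> real^'n^'n" and lam :: "nat \<Rightarrow> complex"
  assumes cG: "continuous_on UNIV Gam" "continuous_on UNIV (vd Gam)" "continuous_on UNIV R"
    and per: "\<And>t. Gam (t + 1) = Gam t" "\<And>t. R (t + 1) = R t"
    and dG: "\<And>t. (Gam has_vector_derivative vd Gam t) (at t)"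
    and fin: "finite E" and inj: "inj_on lam E" and eig: "\<forall>k\<in>E. poincare_eigenvalue Gam R (lam k)"
  shows "card E \<le> 2 * CARD('n)"
proof -
  define P where "P k V = (jacobi_sol Gam R V \<and> V \<noteq> 0 \<and> (\<forall>t. V (t + 1) = lam k *s V t))" for k V
  define Vk where "Vk k = (SOME V. P k V)" for k
  have Vk: "P k (Vk k)" if kE: "k \<in> E" for k
  proof -
    obtain V where "P k V" using eig_to_shift[OF cG per dG bspec[OF eig kE]] unfolding P_def by blast
    then show ?thesis unfolding Vk_def by (rule someI[where P="P k"])
  qed
  have injV: "inj_on Vk E"
  proof (rule inj_onI)
    fix k j assume kj: "k \<in> E" "j \<in> E" "Vk k = Vk j"
    have Pk: "P k (Vk k)" and Pj: "P j (Vk k)" using Vk[OF kj(1)] Vk[OF kj(2)] kj(3) by auto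
    obtain t where t: "Vk k t \<noteq> 0" using Pk unfolding P_def by (auto simp: fun_eq_iff)
    then obtain i where i: "Vk k t $ i \<noteq> 0" by (auto simp: vec_eq_iff)
    have "lam k *s Vk k t = lam j *s Vk k t" using Pk Pj unfolding P_def by metis
    then have "lam k * Vk k t $ i = lam j * Vk k t $ i" by (metis vector_smult_component)
    then have "lam k = lam j" using i by simp
    then show "k = j" using inj kj by (auto simp: inj_on_def)
  qed
  have ind: "fs.independent (Vk ` E)"
  proof (rule fs.independent_if_scalars_zero)
    show "finite (Vk ` E)" using fin by simp
    fix f x assume s: "(\<Sum>x\<in>Vk ` E. fscale (f x) x) = 0" and x: "x \<in> Vk ` E"
    have "(\<Sum>x\<in>Vk ` E. fscale (f x) x) = (\<Sum>k\<in>E. fscale (f (Vk k)) (Vk k))"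
      by (rule sum.reindex_cong[OF injV refl]) simp
    then have s2: "(\<Sum>k\<in>E. fscale (f (Vk k)) (Vk k)) = 0" using s by simp
    have "(\<Sum>k\<in>E. f (Vk k) *s Vk k t) = 0" for t
    proof -
      have "(\<Sum>k\<in>E. fscale (f (Vk k)) (Vk k)) t = 0" using s2 by simp
      then show ?thesis by (simp add: sum_fun_apply fscale_apply)
    qed
    then have "\<forall>k\<in>E. f (Vk k) = 0"
      using eig_indep[OF fin inj, of Vk "\<lambda>k. f (Vk k)"] Vk unfolding P_def by blast
    then show "f x = 0" using x by auto
  qed
  have "finite (Vk ` E) \<and> card (Vk ` E) \<le> 2 * CARD('n)"
    by (rule sol_bound[OF cG _ ind]) (use Vk in \<open>auto simp: P_def\<close>)
  then show ?thesis using card_image[OF injV] by simp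
qed

theorem lemma6p3:
  fixes eps :: "'n::finite \<Rightarrow> real" and Gam R :: "real \<Rightarrow> real^'n^'n"
  assumes eps: "\<forall>i. eps i = 1 \<or> eps i = -1"
    and smooth: "smooth_fun Gam" "smooth_fun R"
    and periodic: "\<forall>t. Gam (t + 1) = Gam t" "\<forall>t. R (t + 1) = R t"
    and metric: "\<forall>t i j. eps i * Gam t $ i $ j = - (eps j * Gam t $ j $ i)"
    and curv_sym: "\<forall>t i j. eps i * R t $ i $ j = eps j * R t $ j $ i"
  shows "(\<forall>z. cmod z = 1 \<longrightarrow>
            int (n_minus eps Gam R z) \<le> 2 * int CARD('n) - int (n0 Gam R))
       \<and> (\<forall>z. cmod z = 1 \<and> \<not> poincare_eigenvalue Gam R z \<longrightarrow>
            int (n_minus eps Gam R z) \<le> int CARD('n) - int (n0 Gam R))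
       \<and> (\<forall>N::nat. N \<ge> 1 \<longrightarrow>
            (let \<omega> = exp (2 * pi * \<i> / of_nat N) in
              0 \<le> (\<Sum>k<N. int (n_minus eps Gam R (\<omega> ^ k))) \<and>
              (\<Sum>k<N. int (n_minus eps Gam R (\<omega> ^ k)))
                \<le> int N * (int CARD('n) - int (n0 Gam R)) + 4 * int CARD('n) ^ 2
                   - 2 * int (n0 Gam R) * int CARD('n)))"
proof -
  have cG1: "continuous_on UNIV Gam" and cG2: "continuous_on UNIV (vd Gam)"
    and dG: "\<And>t. (Gam has_vector_derivative vd Gam t) (at t)"
    using smooth_facts[OF smooth(1)] by auto
  have cR: "continuous_on UNIV R" using smooth_facts[OF smooth(2)] by auto
  note cG = cG1 cG2 cR
  have per: "\<And>t. Gam (t + 1) = Gam t" "\<And>t. R (t + 1) = R t" using periodic by auto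
  define n where "n = CARD('n)"
  define a where "a = n0 Gam R"
  have an: "a \<le> n" unfolding a_def n_def by (rule n0_le[OF cG])
  have P1: "n_minus eps Gam R z + a \<le> 2 * n" for z
    unfolding a_def n_def by (rule nminus_le) (rule part_bound(1)[OF cG])
  have P2: "n_minus eps Gam R z + a \<le> n" if "cmod z = 1" "\<not> poincare_eigenvalue Gam R z" for z
    unfolding a_def n_def by (rule nminus_le) (rule part_bound(2)[OF cG _ _ _ that])
  have part3: "(\<Sum>k<N. int (n_minus eps Gam R (exp (2 * pi * \<i> / of_nat N) ^ k)))
      \<le> int N * (int n - int a) + 4 * int n ^ 2 - 2 * int a * int n" if N: "N \<ge> 1" for N
  proof -
    define w where "w = exp (2 * pi * \<i> / of_nat N)"
    define E where "E = {k \<in> {..<N}. poincare_eigenvalue Gam R (w ^ k)}"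
    have finE: "finite E" by (simp add: E_def)
    have injE: "inj_on (\<lambda>k. w ^ k) E"
      unfolding w_def by (rule inj_on_subset[OF omega_inj[OF N]]) (auto simp: E_def)
    have cE: "card E \<le> 2 * n"
      unfolding n_def by (rule eig_card[OF cG per dG finE injE]) (simp add: E_def)
    have tb: "int (n_minus eps Gam R (w ^ k)) \<le> (int n - int a) + (if k \<in> E then int n else 0)"
      if "k \<in> {..<N}" for k
    proof (cases "k \<in> E")
      case True then show ?thesis using P1[of "w ^ k"] by simp
    next
      case False
      then have "\<not> poincare_eigenvalue Gam R (w ^ k)" using that by (simp add: E_def)
      then show ?thesis using P2[of "w ^ k"] False omega_norm[of N k] unfolding w_def by simp
    qed
    have "(\<Sum>k<N. int (n_minus eps Gam R (w ^ k))) \<le> (\<Sum>k<N. (int n - int a) + (if k \<in> E then int n else 0))"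
      by (rule sum_mono) (rule tb)
    also have "\<dots> = int N * (int n - int a) + int (card E) * int n"
    proof -
      have EN: "{..<N} \<inter> E = E" by (auto simp: E_def)
      have "(\<Sum>k<N. (if k \<in> E then int n else 0)) = int (card E) * int n"
        by (simp add: sum.If_cases EN)
      then show ?thesis by (simp add: sum.distrib)
    qed
    also have "\<dots> \<le> int N * (int n - int a) + 4 * int n ^ 2 - 2 * int a * int n"
    proof -
      have "int (card E) * int n \<le> (2 * int n) * int n" using cE by (intro mult_right_mono) auto
      moreover have "int a * int n \<le> int n * int n" using an by (intro mult_right_mono) auto
      ultimately show ?thesis by (simp add: power2_eq_square algebra_simps)
    qed
    finally show ?thesis unfolding w_def .
  qed
  show ?thesis
  proof (intro conjI allI impI)
    fix z :: complex assume "cmod z = 1"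
    show "int (n_minus eps Gam R z) \<le> 2 * int CARD('n) - int (n0 Gam R)"
      using P1[of z] unfolding a_def n_def by linarith
  next
    fix z :: complex assume z: "cmod z = 1 \<and> \<not> poincare_eigenvalue Gam R z"
    show "int (n_minus eps Gam R z) \<le> int CARD('n) - int (n0 Gam R)"
      using P2[of z] z unfolding a_def n_def by linarith
  next
    fix N :: nat assume N: "N \<ge> 1"
    show "let \<omega> = exp (2 * pi * \<i> / of_nat N) in
              0 \<le> (\<Sum>k<N. int (n_minus eps Gam R (\<omega> ^ k))) \<and>
              (\<Sum>k<N. int (n_minus eps Gam R (\<omega> ^ k)))
                \<le> int N * (int CARD('n) - int (n0 Gam R)) + 4 * int CARD('n) ^ 2
                   - 2 * int (n0 Gam R) * int CARD('n)"
      unfolding Let_def using part3[OF N] unfolding a_def n_def by (simp add: sum_nonneg)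
  qed
qed


end
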